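(* For every $n\geq 4$, the clique number of $\mathrm{KG}(\mathcal{T}_n)$ equals $\lfloor n/2\rfloor$. In particular $\chi(\mathrm{KG}(\mathcal{T}_n))\ge\lfloor n/2\rfloor$.
   Context: Label the vertices of a convex $n$-gon by $1,\dots,n$ in cyclic order; $\mathrm{Diag}_n = \{\{i,j\} \subseteq [n]: i-j\not\equiv \pm1 \pmod n\}$; a triangulation is identified with its set of $n-3$ diagonals, and $\mathcal{T}_n$ is the set of triangulations. $\mathrm{KG}(\mathcal{T}_n)$ is the graph on $\mathcal{T}_n$ in which two triangulations are adjacent iff they share no diagonal. *)

theory Defs
  imports "HOL-Number_Theory.Number_Theory"
begin

definition Diag :: "nat \<Rightarrow> nat set set" where
  "Diag n = {{i, j} | i j. i \<in> {1..n} \<and> j \<in> {1..n} \<and> i \<noteq> j \<and>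
      \<not> [int i - int j = 1] (mod int n) \<and> \<not> [int i - int j = -1] (mod int n)}"

definition crosses :: "nat set \<Rightarrow> nat set \<Rightarrow> bool" where
  "crosses d e \<longleftrightarrow> (\<exists>a b c f. ((d = {a, b} \<and> e = {c, f}) \<or> (d = {c, f} \<and> e = {a, b}))
      \<and> a < c \<and> c < b \<and> b < f)"

definition is_triangulation :: "nat \<Rightarrow> nat set set \<Rightarrow> bool" where
  "is_triangulation n T \<longleftrightarrow> T \<subseteq> Diag n \<and>
     (\<forall>d\<in>T. \<forall>e\<in>T. \<not> crosses d e) \<and>
     (\<forall>d\<in>Diag n - T. \<exists>e\<in>T. crosses d e)"

definition Triangs :: "nat \<Rightarrow> nat set set set" where
  "Triangs n = {T. is_triangulation n T}"

definition KG_adj :: "nat set set \<Rightarrow> nat set set \<Rightarrow> bool" where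
  "KG_adj T T' \<longleftrightarrow> T \<inter> T' = {}"

definition is_KG_clique :: "nat \<Rightarrow> nat set set set \<Rightarrow> bool" where
  "is_KG_clique n C \<longleftrightarrow> C \<subseteq> Triangs n \<and>
     (\<forall>T\<in>C. \<forall>T'\<in>C. T \<noteq> T' \<longrightarrow> KG_adj T T')"

definition KG_clique_number :: "nat \<Rightarrow> nat" where
  "KG_clique_number n = Max {card C | C. is_KG_clique n C}"

definition KG_chromatic_number :: "nat \<Rightarrow> nat" where
  "KG_chromatic_number n = (LEAST k. \<exists>f :: nat set set \<Rightarrow> nat.
      (\<forall>T\<in>Triangs n. f T < k) \<and>
      (\<forall>T\<in>Triangs n. \<forall>T'\<in>Triangs n. T \<noteq> T' \<and> KG_adj T T' \<longrightarrow> f T \<noteq> f T'))"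

end

theory Submission
  imports Defs
begin

lemma dvd_range: "(m::int) > 0 \<Longrightarrow> m dvd v \<Longrightarrow> -m < v \<Longrightarrow> v < m \<Longrightarrow> v = 0"
  using dvd_imp_le_int[of v m] by fastforce

lemma cong_lemma:
  assumes "1 \<le> x" "x < y" "y \<le> n"
  shows "[int x - int y = 1] (mod int n) \<longleftrightarrow> y - x + 1 = n"
    and "[int x - int y = -1] (mod int n) \<longleftrightarrow> y - x = 1"
    and "[int y - int x = 1] (mod int n) \<longleftrightarrow> y - x = 1"
    and "[int y - int x = -1] (mod int n) \<longleftrightarrow> y - x + 1 = n"
proof -
  have n: "int n > 0" using assms by auto
  show "[int x - int y = 1] (mod int n) \<longleftrightarrow> y - x + 1 = n"
  proof
    assume "[int x - int y = 1] (mod int n)"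
    then have "int n dvd (int x - int y - 1) " by (simp add: cong_iff_dvd_diff)
    then have "int n dvd (int x - int y - 1 + int n)" by simp
    then have "int x - int y - 1 + int n = 0" apply (rule dvd_range[OF n]) using assms by auto
    then show "y - x + 1 = n" using assms by linarith
  next
    assume "y - x + 1 = n"
    then have "int x - int y - 1 = - int n" using assms by linarith
    then show "[int x - int y = 1] (mod int n)" by (simp add: cong_iff_dvd_diff)
  qed
  show "[int x - int y = -1] (mod int n) \<longleftrightarrow> y - x = 1"
  proof
    assume "[int x - int y = -1] (mod int n)"
    then have "int n dvd (int x - int y + 1) " by (simp add: cong_iff_dvd_diff)
    then have "int x - int y + 1 = 0" apply (rule dvd_range[OF n]) using assms by auto
    then show "y - x = 1" using assms by linarith
  next
    assume "y - x = 1"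
    then have "int x - int y + 1 = 0" using assms by linarith
    then show "[int x - int y = -1] (mod int n)" by (simp add: cong_iff_dvd_diff)
  qed
  show "[int y - int x = 1] (mod int n) \<longleftrightarrow> y - x = 1"
  proof
    assume "[int y - int x = 1] (mod int n)"
    then have "int n dvd (int y - int x - 1) " by (simp add: cong_iff_dvd_diff)
    then have "int y - int x - 1 = 0" apply (rule dvd_range[OF n]) using assms by auto
    then show "y - x = 1" using assms by linarith
  next
    assume "y - x = 1"
    then have "int y - int x - 1 = 0" using assms by linarith
    then show "[int y - int x = 1] (mod int n)" by (simp add: cong_iff_dvd_diff)
  qed
  show "[int y - int x = -1] (mod int n) \<longleftrightarrow> y - x + 1 = n"
  proof
    assume "[int y - int x = -1] (mod int n)"
    then have "int n dvd (int y - int x + 1) " by (simp add: cong_iff_dvd_diff)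
    then have "int n dvd (int y - int x + 1 - int n)" by simp
    then have "int y - int x + 1 - int n = 0" apply (rule dvd_range[OF n]) using assms by auto
    then show "y - x + 1 = n" using assms by linarith
  next
    assume "y - x + 1 = n"
    then have "int y - int x + 1 = int n" using assms by linarith
    then show "[int y - int x = -1] (mod int n)" by (simp add: cong_iff_dvd_diff)
  qed
qed

lemma diag_pair:
  assumes "x < y"
  shows "{x,y} \<in> Diag n \<longleftrightarrow> 1 \<le> x \<and> y \<le> n \<and> 2 \<le> y - x \<and> y - x + 2 \<le> n"
proof
  assume "{x,y} \<in> Diag n"
  then obtain i j where ij: "{x,y} = {i,j}" "i \<in> {1..n}" "j \<in> {1..n}" "i \<noteq> j"
    "\<not> [int i - int j = 1] (mod int n)" "\<not> [int i - int j = -1] (mod int n)"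
    unfolding Diag_def by blast
  have "(i = x \<and> j = y) \<or> (i = y \<and> j = x)" using ij(1) assms by (metis doubleton_eq_iff)
  then show "1 \<le> x \<and> y \<le> n \<and> 2 \<le> y - x \<and> y - x + 2 \<le> n"
  proof
    assume h: "i = x \<and> j = y"
    then have r: "1 \<le> x" "y \<le> n" using ij by auto
    show ?thesis using cong_lemma[OF r(1) assms r(2)] ij h r assms by auto
  next
    assume h: "i = y \<and> j = x"
    then have r: "1 \<le> x" "y \<le> n" using ij by auto
    show ?thesis using cong_lemma[OF r(1) assms r(2)] ij h r assms by auto
  qed
next
  assume h: "1 \<le> x \<and> y \<le> n \<and> 2 \<le> y - x \<and> y - x + 2 \<le> n"
  then have "\<not> [int x - int y = 1] (mod int n)" "\<not> [int x - int y = -1] (mod int n)"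
    using cong_lemma[of x y n] assms by auto
  moreover have "x \<in> {1..n}" "y \<in> {1..n}" "x \<noteq> y" using h assms by auto
  ultimately show "{x,y} \<in> Diag n" unfolding Diag_def by blast
qed

lemma diag_elem:
  assumes "d \<in> Diag n"
  obtains x y where "d = {x,y}" "x < y" "1 \<le> x" "y \<le> n" "2 \<le> y - x" "y - x + 2 \<le> n"
proof -
  obtain i j where ij: "d = {i,j}" "i \<noteq> j" using assms unfolding Diag_def by blast
  show ?thesis
  proof (cases "i < j")
    case True
    then show ?thesis using that diag_pair[OF True, of n] assms ij by auto
  next
    case False
    then have ji: "j < i" using ij by auto
    have dj: "d = {j,i}" using ij by (simp add: insert_commute)
    show ?thesis apply (rule that[of j i]) using dj diag_pair[OF ji, of n] assms ij by auto
  qed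
qed

lemma crosses_sym: "crosses d e \<longleftrightarrow> crosses e d"
  unfolding crosses_def by blast

lemma crosses_pair:
  assumes "a < b" "c < f"
  shows "crosses {a,b} {c,f} \<longleftrightarrow> (a < c \<and> c < b \<and> b < f) \<or> (c < a \<and> a < f \<and> f < b)"
proof
  assume "crosses {a,b} {c,f}"
  then obtain a' b' c' f' where h: "({a,b} = {a',b'} \<and> {c,f} = {c',f'}) \<or> ({a,b} = {c',f'} \<and> {c,f} = {a',b'})"
    "a' < c'" "c' < b'" "b' < f'" unfolding crosses_def by blast
  from h(1) show "(a < c \<and> c < b \<and> b < f) \<or> (c < a \<and> a < f \<and> f < b)"
  proof
    assume "{a,b} = {a',b'} \<and> {c,f} = {c',f'}"
    then have "a = a' \<and> b = b' \<and> c = c' \<and> f = f'" using assms h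
      by (metis doubleton_eq_iff order.strict_trans not_less_iff_gr_or_eq)
    then show ?thesis using h by auto
  next
    assume "{a,b} = {c',f'} \<and> {c,f} = {a',b'}"
    then have "a = c' \<and> b = f' \<and> c = a' \<and> f = b'" using assms h
      by (metis doubleton_eq_iff order.strict_trans not_less_iff_gr_or_eq)
    then show ?thesis using h by auto
  qed
next
  assume "(a < c \<and> c < b \<and> b < f) \<or> (c < a \<and> a < f \<and> f < b)"
  then show "crosses {a,b} {c,f}" unfolding crosses_def by blast
qed

lemma tri_sub: "is_triangulation n T \<Longrightarrow> d \<in> T \<Longrightarrow> d \<in> Diag n"
  unfolding is_triangulation_def by blast

lemma tri_nc: "is_triangulation n T \<Longrightarrow> d \<in> T \<Longrightarrow> e \<in> T \<Longrightarrow> \<not> crosses d e"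
  unfolding is_triangulation_def by blast

lemma tri_max: "is_triangulation n T \<Longrightarrow> d \<in> Diag n \<Longrightarrow> d \<notin> T \<Longrightarrow> \<exists>e\<in>T. crosses d e"
  unfolding is_triangulation_def by blast

lemma interval_ear:
  assumes T: "is_triangulation n T" and n4: "n \<ge> 4"
  shows "b - a = m \<Longrightarrow> 1 \<le> a \<Longrightarrow> a + 2 \<le> b \<Longrightarrow> b \<le> n \<Longrightarrow> (\<forall>e\<in>T. \<not> crosses {a,b} e)
     \<Longrightarrow> \<exists>v. a < v \<and> v < b \<and> {v-1, v+1} \<in> T"
proof (induction m arbitrary: a b rule: less_induct)
  case (less m a b)
  show ?case
  proof (cases "{a, a+2} \<in> T")
    case True then show ?thesis using less.prems by (intro exI[of _ "a+1"]) auto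
  next
    case False
    have D: "{a,a+2} \<in> Diag n" using diag_pair[of a "a+2" n] less.prems n4 by auto
    then obtain e where e: "e \<in> T" "crosses {a,a+2} e" using tri_max[OF T D False] by blast
    obtain c f where cf: "e = {c,f}" "c<f" "1\<le>c" "f\<le>n" "2 \<le> f-c"
      using diag_elem[OF tri_sub[OF T e(1)]] by metis
    have cr: "(a < c \<and> c < a+2 \<and> a+2 < f) \<or> (c < a \<and> a < f \<and> f < a+2)"
      using e(2) cf crosses_pair[of a "a+2" c f] by auto
    show ?thesis
    proof (cases "c < a")
      case True
      then have "f = a+1" using cr by auto
      then have "crosses {a,b} e" using cf True less.prems crosses_pair[of a b c f] by auto
      then show ?thesis using less.prems e by auto
    next
      case False
      then have c: "c = a+1" "a+2 < f" using cr by auto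
      show ?thesis
      proof (cases "b < f")
        case True
        then have "crosses {a,b} e" using cf c less.prems crosses_pair[of a b c f] by auto
        then show ?thesis using less.prems e by auto
      next
        case False
        have nc: "\<forall>e'\<in>T. \<not> crosses {c,f} e'" using tri_nc[OF T] e cf by blast
        have lt: "f - c < m" using c False less.prems by auto
        have "\<exists>v. c < v \<and> v < f \<and> {v-1,v+1} \<in> T"
          apply (rule less.IH[OF lt refl]) using nc cf c False less.prems by auto
        then obtain v where "c < v" "v < f" "{v-1,v+1} \<in> T" by blast
        then show ?thesis using c False by (intro exI[of _ v]) auto
      qed
    qed
  qed
qed

definition ear_diag :: "nat \<Rightarrow> nat \<Rightarrow> nat set" where
  "ear_diag n v = (if v = 1 then {n,2} else if v = n then {n-1,1} else {v-1,v+1})"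

definition ears :: "nat \<Rightarrow> nat set set \<Rightarrow> nat set" where
  "ears n T = {v\<in>{1..n}. ear_diag n v \<in> T}"

lemma diag_one: assumes "{1,b} \<in> Diag n" shows "3 \<le> b" "b + 1 \<le> n"
proof -
  obtain x y where xy: "{1,b} = {x,y}" "x < y" "1 \<le> x" "y \<le> n" "2 \<le> y - x" "y - x + 2 \<le> n"
    using diag_elem[OF assms] by metis
  then have "x = 1 \<and> y = b" by (metis doubleton_eq_iff not_le not_less_iff_gr_or_eq)
  then show "3 \<le> b" "b + 1 \<le> n" using xy by auto
qed

lemma two_ears:
  assumes T: "is_triangulation n T" and n: "n \<ge> 4"
  shows "\<exists>v w. v \<noteq> w \<and> v \<in> ears n T \<and> w \<in> ears n T"
proof (cases "\<exists>b. {1,b} \<in> T")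
  case True
  define B where "B = {b. {1,b} \<in> T}"
  have Bfin: "finite B"
  proof (rule finite_subset[of _ "{..n}"])
    show "B \<subseteq> {..n}" using diag_one tri_sub[OF T] unfolding B_def by fastforce
  qed auto
  define bm where "bm = Max B"
  have bmB: "bm \<in> B" using True Bfin unfolding bm_def B_def by (metis Max_in empty_iff mem_Collect_eq)
  have bmax: "\<And>b. {1,b} \<in> T \<Longrightarrow> b \<le> bm" using Bfin unfolding bm_def B_def by simp
  have bmT: "{1,bm} \<in> T" using bmB B_def by simp
  have bm: "3 \<le> bm" "bm + 1 \<le> n" using diag_one tri_sub[OF T bmT] by auto
  obtain v1 where v1: "1 < v1" "v1 < bm" "{v1-1,v1+1} \<in> T"
    using interval_ear[OF T n refl, of 1 bm] bm tri_nc[OF T bmT] by auto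
  have v1e: "v1 \<in> ears n T" using v1 bm unfolding ears_def ear_diag_def by auto
  show ?thesis
  proof (cases "bm + 1 = n")
    case True
    have "n \<in> ears n T" using bmT True n unfolding ears_def ear_diag_def by (auto simp: insert_commute)
    then show ?thesis using v1e v1 True by (metis less_not_refl2 less_trans less_add_one)
  next
    case False
    have nc: "\<forall>e\<in>T. \<not> crosses {bm,n} e"
    proof
      fix e assume e: "e \<in> T"
      obtain c f where cf: "e = {c,f}" "c<f" "1\<le>c" "f\<le>n"
        using diag_elem[OF tri_sub[OF T e]] by metis
      show "\<not> crosses {bm,n} e"
      proof
        assume "crosses {bm,n} e"
        then have cr: "c < bm \<and> bm < f \<and> f < n" using crosses_pair[of bm n c f] cf bm by auto
        show False
        proof (cases "c = 1")
          case True
          then show False using bmax[of f] cr cf e by auto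
        next
          case False
          then have "crosses {1,bm} e" using crosses_pair[of 1 bm c f] cf cr bm by auto
          then show False using tri_nc[OF T bmT e] by simp
        qed
      qed
    qed
    obtain v2 where v2: "bm < v2" "v2 < n" "{v2-1,v2+1} \<in> T"
      using interval_ear[OF T n refl, of bm n] bm False nc by auto
    have "v2 \<in> ears n T" using v2 bm unfolding ears_def ear_diag_def by auto
    then show ?thesis using v1e v1 v2 by (metis less_not_refl2 less_trans)
  qed
next
  case False
  have D: "{2,n} \<in> Diag n" using diag_pair[of 2 n n] n by auto
  have "{2,n} \<in> T"
  proof (rule ccontr)
    assume "{2,n} \<notin> T"
    then obtain e where e: "e \<in> T" "crosses {2,n} e" using tri_max[OF T D] by blast
    obtain c f where cf: "e = {c,f}" "c<f" "1\<le>c" "f\<le>n"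
      using diag_elem[OF tri_sub[OF T e(1)]] by metis
    have "c < 2" using crosses_pair[of 2 n c f] cf e n by auto
    then have "c = 1" using cf by auto
    then show False using False e cf by auto
  qed
  then have e1: "1 \<in> ears n T" using n unfolding ears_def ear_diag_def by (auto simp: insert_commute)
  have nc: "\<forall>e\<in>T. \<not> crosses {1,n} e"
  proof
    fix e assume e: "e \<in> T"
    obtain c f where cf: "e = {c,f}" "c<f" "1\<le>c" "f\<le>n"
      using diag_elem[OF tri_sub[OF T e]] by metis
    show "\<not> crosses {1,n} e" using crosses_pair[of 1 n c f] cf n by auto
  qed
  obtain v1 where v1: "1 < v1" "v1 < n" "{v1-1,v1+1} \<in> T"
    using interval_ear[OF T n refl, of 1 n] n nc by auto
  have "v1 \<in> ears n T" using v1 unfolding ears_def ear_diag_def by auto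
  then show ?thesis using e1 v1 by (metis less_not_refl2)
qed

lemma card_ears:
  assumes T: "is_triangulation n T" and n: "n \<ge> 4"
  shows "card (ears n T) \<ge> 2"
proof -
  obtain v w where vw: "v \<noteq> w" "v \<in> ears n T" "w \<in> ears n T" using two_ears[OF assms] by blast
  have "finite (ears n T)" unfolding ears_def by simp
  then have "card {v,w} \<le> card (ears n T)" using vw by (intro card_mono) auto
  then show ?thesis using vw by simp
qed

lemma finite_Diag: "finite (Diag n)"
proof (rule finite_subset[of _ "Pow {1..n}"])
  show "Diag n \<subseteq> Pow {1..n}"
  proof
    fix d assume "d \<in> Diag n"
    then obtain x y where "d = {x,y}" "1 \<le> x" "x < y" "y \<le> n" by (metis diag_elem)
    then show "d \<in> Pow {1..n}" by auto
  qed
qed auto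

lemma finite_Triangs: "finite (Triangs n)"
proof (rule finite_subset[of _ "Pow (Diag n)"])
  show "Triangs n \<subseteq> Pow (Diag n)" unfolding Triangs_def is_triangulation_def by auto
qed (simp add: finite_Diag)

lemma clique_upper:
  assumes C: "is_KG_clique n C" and n: "n \<ge> 4"
  shows "card C \<le> n div 2"
proof -
  have CT: "\<And>T. T \<in> C \<Longrightarrow> is_triangulation n T" using C unfolding is_KG_clique_def Triangs_def by auto
  have fin: "finite C" using C finite_Triangs unfolding is_KG_clique_def by (metis finite_subset)
  have disj: "\<forall>T\<in>C. \<forall>T'\<in>C. T \<noteq> T' \<longrightarrow> ears n T \<inter> ears n T' = {}"
    using C unfolding is_KG_clique_def KG_adj_def ears_def by blast
  have "card (\<Union>T\<in>C. ears n T) = (\<Sum>T\<in>C. card (ears n T))"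
    using fin disj by (intro card_UN_disjoint) (auto simp: ears_def)
  also have "\<dots> \<ge> (\<Sum>T\<in>C. 2)" using card_ears[OF CT n] by (intro sum_mono) auto
  finally have "2 * card C \<le> card (\<Union>T\<in>C. ears n T)" by (simp add: mult.commute)
  also have "\<dots> \<le> card {1..n}" by (intro card_mono) (auto simp: ears_def)
  finally show ?thesis by simp
qed

definition rot :: "nat \<Rightarrow> nat \<Rightarrow> nat" where
  "rot n x = (if x = n then 1 else x + 1)"

definition unrot :: "nat \<Rightarrow> nat \<Rightarrow> nat" where
  "unrot n x = (if x = 1 then n else x - 1)"

definition rotT :: "nat \<Rightarrow> nat set set \<Rightarrow> nat set set" where
  "rotT n T = (\<lambda>d. rot n ` d) ` T"

lemma unrot_rot: "1 \<le> x \<Longrightarrow> x \<le> n \<Longrightarrow> unrot n (rot n x) = x"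
  unfolding rot_def unrot_def by auto

lemma rot_unrot: "1 \<le> x \<Longrightarrow> x \<le> n \<Longrightarrow> rot n (unrot n x) = x"
  unfolding rot_def unrot_def by auto

lemma diag_sub: "d \<in> Diag n \<Longrightarrow> d \<subseteq> {1..n}"
proof -
  assume "d \<in> Diag n"
  then obtain x y where "d = {x,y}" "x < y" "1 \<le> x" "y \<le> n" by (rule diag_elem)
  then show ?thesis by auto
qed

lemma unrot_rot_set: "d \<in> Diag n \<Longrightarrow> unrot n ` rot n ` d = d"
proof -
  assume "d \<in> Diag n"
  then have sub: "d \<subseteq> {1..n}" by (rule diag_sub)
  have "unrot n ` rot n ` d = (\<lambda>x. unrot n (rot n x)) ` d" by (simp only: image_image)
  also have "\<dots> = (\<lambda>x. x) ` d" using sub by (intro image_cong) (auto simp: unrot_rot)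
  finally show ?thesis by simp
qed

lemma rot_unrot_set: "d \<in> Diag n \<Longrightarrow> rot n ` unrot n ` d = d"
proof -
  assume "d \<in> Diag n"
  then have sub: "d \<subseteq> {1..n}" by (rule diag_sub)
  have "rot n ` unrot n ` d = (\<lambda>x. rot n (unrot n x)) ` d" by (simp only: image_image)
  also have "\<dots> = (\<lambda>x. x) ` d" using sub by (intro image_cong) (auto simp: rot_unrot)
  finally show ?thesis by simp
qed

lemma rot_diag: assumes "d \<in> Diag n" shows "rot n ` d \<in> Diag n"
proof -
  obtain x y where xy: "d = {x,y}" "x < y" "1 \<le> x" "y \<le> n" "2 \<le> y - x" "y - x + 2 \<le> n"
    using diag_elem[OF assms] by metis
  show ?thesis
  proof (cases "y = n")
    case True
    have e: "rot n ` d = {1, x+1}" using xy True unfolding rot_def by auto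
    have lt: "1 < x + 1" using xy by simp
    have "{1, x+1} \<in> Diag n" unfolding diag_pair[OF lt] using xy True by (intro conjI; linarith)
    then show ?thesis unfolding e .
  next
    case False
    have e: "rot n ` d = {x+1, y+1}" using xy False unfolding rot_def by auto
    have lt: "x + 1 < y + 1" using xy by simp
    have "{x+1, y+1} \<in> Diag n" unfolding diag_pair[OF lt] using xy False by (intro conjI; linarith)
    then show ?thesis unfolding e .
  qed
qed

lemma unrot_diag: assumes "d \<in> Diag n" shows "unrot n ` d \<in> Diag n"
proof -
  obtain x y where xy: "d = {x,y}" "x < y" "1 \<le> x" "y \<le> n" "2 \<le> y - x" "y - x + 2 \<le> n"
    using diag_elem[OF assms] by metis
  show ?thesis
  proof (cases "x = 1")
    case True
    have e: "unrot n ` d = {y-1, n}" using xy True unfolding unrot_def by auto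
    have lt: "y - 1 < n" using xy by simp
    have "{y-1, n} \<in> Diag n" unfolding diag_pair[OF lt] using xy True by (intro conjI; linarith)
    then show ?thesis unfolding e .
  next
    case False
    have e: "unrot n ` d = {x-1, y-1}" using xy False unfolding unrot_def by auto
    have lt: "x - 1 < y - 1" using xy False by simp
    have "{x-1, y-1} \<in> Diag n" unfolding diag_pair[OF lt] using xy False by (intro conjI; linarith)
    then show ?thesis unfolding e .
  qed
qed

lemma rot_cross_pts:
  assumes "1 \<le> a" "a < c" "c < b" "b < f" "f \<le> n"
  shows "crosses {rot n a, rot n b} {rot n c, rot n f}"
proof (cases "f = n")
  case True
  have e: "{rot n a, rot n b} = {a+1, b+1}" "{rot n c, rot n f} = {1, c+1}"
    using assms True unfolding rot_def by auto
  show ?thesis unfolding e using crosses_pair[of "a+1" "b+1" 1 "c+1"] assms by auto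
next
  case False
  have e: "{rot n a, rot n b} = {a+1, b+1}" "{rot n c, rot n f} = {c+1, f+1}"
    using assms False unfolding rot_def by auto
  show ?thesis unfolding e using crosses_pair[of "a+1" "b+1" "c+1" "f+1"] assms by auto
qed

lemma unrot_cross_pts:
  assumes "1 \<le> a" "a < c" "c < b" "b < f" "f \<le> n"
  shows "crosses {unrot n a, unrot n b} {unrot n c, unrot n f}"
proof (cases "a = 1")
  case True
  have e: "{unrot n a, unrot n b} = {b-1, n}" "{unrot n c, unrot n f} = {c-1, f-1}"
    using assms True unfolding unrot_def by auto
  show ?thesis unfolding e using crosses_pair[of "b-1" n "c-1" "f-1"] assms by auto
next
  case False
  have e: "{unrot n a, unrot n b} = {a-1, b-1}" "{unrot n c, unrot n f} = {c-1, f-1}"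
    using assms False unfolding unrot_def by auto
  show ?thesis unfolding e using crosses_pair[of "a-1" "b-1" "c-1" "f-1"] assms by auto
qed

lemma map_cross:
  assumes pts: "\<And>a b c f. 1 \<le> a \<Longrightarrow> a < c \<Longrightarrow> c < b \<Longrightarrow> b < f \<Longrightarrow> f \<le> n
      \<Longrightarrow> crosses {g a, g b} {g c, g f}"
  and d: "d \<in> Diag n" and e: "e \<in> Diag n" and cr: "crosses d e"
  shows "crosses (g ` d) (g ` e)"
proof -
  obtain x y where xy: "d = {x,y}" "x < y" "1 \<le> x" "y \<le> n"
    using diag_elem[OF d] by metis
  obtain c f where cf: "e = {c,f}" "c < f" "1 \<le> c" "f \<le> n"
    using diag_elem[OF e] by metis
  have "(x < c \<and> c < y \<and> y < f) \<or> (c < x \<and> x < f \<and> f < y)"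
    using crosses_pair[of x y c f] xy cf cr by auto
  then show ?thesis
  proof
    assume h: "x < c \<and> c < y \<and> y < f"
    show ?thesis using pts[of x c y f] h xy cf by auto
  next
    assume h: "c < x \<and> x < f \<and> f < y"
    show ?thesis using pts[of c x f y] h xy cf crosses_sym by auto
  qed
qed

lemma rot_cross: "d \<in> Diag n \<Longrightarrow> e \<in> Diag n \<Longrightarrow> crosses d e \<Longrightarrow> crosses (rot n ` d) (rot n ` e)"
  by (rule map_cross[OF rot_cross_pts])

lemma unrot_cross: "d \<in> Diag n \<Longrightarrow> e \<in> Diag n \<Longrightarrow> crosses d e \<Longrightarrow> crosses (unrot n ` d) (unrot n ` e)"
  by (rule map_cross[OF unrot_cross_pts])

lemma rotT_tri:
  assumes T: "is_triangulation n T"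
  shows "is_triangulation n (rotT n T)"
  unfolding is_triangulation_def
proof (intro conjI ballI)
  show "rotT n T \<subseteq> Diag n"
  proof
    fix d' assume "d' \<in> rotT n T"
    then obtain d where d: "d \<in> T" "d' = rot n ` d" unfolding rotT_def by blast
    show "d' \<in> Diag n" unfolding d(2) by (rule rot_diag[OF tri_sub[OF T d(1)]])
  qed
next
  fix d' e' assume d': "d' \<in> rotT n T" and e': "e' \<in> rotT n T"
  obtain d where d: "d \<in> T" "d' = rot n ` d" using d' unfolding rotT_def by blast
  obtain e where e: "e \<in> T" "e' = rot n ` e" using e' unfolding rotT_def by blast
  have dD: "d \<in> Diag n" by (rule tri_sub[OF T d(1)])
  have eD: "e \<in> Diag n" by (rule tri_sub[OF T e(1)])
  show "\<not> crosses d' e'"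
  proof
    assume c: "crosses d' e'"
    have "crosses (unrot n ` d') (unrot n ` e')"
      using unrot_cross[OF rot_diag[OF dD] rot_diag[OF eD]] c unfolding d(2) e(2) by simp
    then have "crosses d e" unfolding d(2) e(2) unrot_rot_set[OF dD] unrot_rot_set[OF eD] .
    then show False using tri_nc[OF T d(1) e(1)] by simp
  qed
next
  fix d' assume d': "d' \<in> Diag n - rotT n T"
  then have d'D: "d' \<in> Diag n" by simp
  define d where "d = unrot n ` d'"
  have dD: "d \<in> Diag n" unfolding d_def by (rule unrot_diag[OF d'D])
  have dd: "rot n ` d = d'" unfolding d_def by (rule rot_unrot_set[OF d'D])
  have "d \<notin> T"
  proof
    assume "d \<in> T"
    then have "rot n ` d \<in> rotT n T" unfolding rotT_def by (rule imageI)
    then show False using d' dd by simp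
  qed
  then obtain e where e: "e \<in> T" "crosses d e" using tri_max[OF T dD] by blast
  have "crosses d' (rot n ` e)" using rot_cross[OF dD tri_sub[OF T e(1)] e(2)] dd by simp
  moreover have "rot n ` e \<in> rotT n T" using e(1) unfolding rotT_def by (rule imageI)
  ultimately show "\<exists>e\<in>rotT n T. crosses d' e" by blast
qed

definition Z0 :: "nat \<Rightarrow> nat set set" where
  "Z0 n = {d \<in> Diag n. \<exists>a b. d = {a,b} \<and> a < b \<and> (a + b = n + 1 \<or> a + b = n + 2)}"

lemma pair_sorted_eq: "{a,b} = {x,y} \<Longrightarrow> a < b \<Longrightarrow> x < (y::nat) \<Longrightarrow> a = x \<and> b = y"
  by (metis doubleton_eq_iff not_less_iff_gr_or_eq order.strict_trans)

lemma Z0_tri: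
  assumes n: "n \<ge> 4"
  shows "is_triangulation n (Z0 n)"
  unfolding is_triangulation_def
proof (intro conjI ballI)
  show "Z0 n \<subseteq> Diag n" unfolding Z0_def by blast
next
  fix d e assume d: "d \<in> Z0 n" and e: "e \<in> Z0 n"
  obtain a b where ab: "d = {a,b}" "a < b" "a + b = n + 1 \<or> a + b = n + 2" using d unfolding Z0_def by blast
  obtain c f where cf: "e = {c,f}" "c < f" "c + f = n + 1 \<or> c + f = n + 2" using e unfolding Z0_def by blast
  show "\<not> crosses d e" using crosses_pair[of a b c f] ab cf by auto
next
  fix d assume d: "d \<in> Diag n - Z0 n"
  obtain a b where ab: "d = {a,b}" "a < b" "1 \<le> a" "b \<le> n" "2 \<le> b - a" "b - a + 2 \<le> n"
    using diag_elem[of d n] d by blast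
  have ns: "a + b \<noteq> n + 1" "a + b \<noteq> n + 2" using d ab unfolding Z0_def by auto
  show "\<exists>e\<in>Z0 n. crosses d e"
  proof (cases "a + b \<le> n")
    case True
    define c where "c = a + 1"
    define f where "f = (if a + b = n then n + 1 - a else n - a)"
    have o: "a < c" "c < b" "b < f" "f \<le> n" "c + f = n + 1 \<or> c + f = n + 2"
      using ab True unfolding c_def f_def by auto
    have eD: "{c,f} \<in> Diag n" using diag_pair[of c f n] o ab by auto
    have cf: "c < f" using o by simp
    have "{c,f} \<in> Z0 n" unfolding Z0_def using eD o cf by blast
    moreover have "crosses d {c,f}" using crosses_pair[of a b c f] o ab by auto
    ultimately show ?thesis by blast
  next
    case False
    then have F: "a + b \<ge> n + 3" using ns by auto
    define c where "c = n + 2 - b"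
    define f where "f = b - 1"
    have o: "c < a" "a < f" "f < b" "2 \<le> c" "c + f = n + 1"
      using ab F unfolding c_def f_def by auto
    have eD: "{c,f} \<in> Diag n" using diag_pair[of c f n] o ab by auto
    have cf: "c < f" using o by simp
    have "{c,f} \<in> Z0 n" unfolding Z0_def using eD o cf by blast
    moreover have "crosses d {c,f}" using crosses_pair[of a b c f] o ab by auto
    ultimately show ?thesis by blast
  qed
qed

definition Zi :: "nat \<Rightarrow> nat \<Rightarrow> nat set set" where
  "Zi n i = (rotT n ^^ i) (Z0 n)"

lemma Zi_tri: "n \<ge> 4 \<Longrightarrow> is_triangulation n (Zi n i)"
  unfolding Zi_def by (induction i) (auto simp: Z0_tri rotT_tri)

lemma Zi_sum:
  assumes n: "n \<ge> 4"
  shows "d \<in> Zi n i \<Longrightarrow> \<exists>a b. d = {a,b} \<and> a < b \<and> 1 \<le> a \<and> b \<le> n \<and>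
     ((a+b) mod n = (1+2*i) mod n \<or> (a+b) mod n = (2+2*i) mod n)"
proof (induction i arbitrary: d)
  case 0
  then have d: "d \<in> Z0 n" unfolding Zi_def by simp
  then have dD: "d \<in> Diag n" unfolding Z0_def by simp
  from d obtain a b where ab: "d = {a,b}" "a < b" "a + b = n + 1 \<or> a + b = n + 2" unfolding Z0_def by blast
  obtain x y where xy: "d = {x,y}" "x < y" "1 \<le> x" "y \<le> n" using diag_elem[OF dD] by metis
  have "a = x \<and> b = y" using pair_sorted_eq[of a b x y] ab xy by simp
  moreover have "(a+b) mod n = 1 mod n \<or> (a+b) mod n = 2 mod n" using ab(3) by (metis add.commute mod_add_self2)
  ultimately show ?case using xy by auto
next
  case (Suc i)
  then obtain d0 where d0: "d0 \<in> Zi n i" "d = rot n ` d0" unfolding Zi_def rotT_def by auto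
  obtain a b where ab: "d0 = {a,b}" "a < b" "1 \<le> a" "b \<le> n"
     "(a+b) mod n = (1+2*i) mod n \<or> (a+b) mod n = (2+2*i) mod n" using Suc.IH[OF d0(1)] by blast
  have key: "(x + 2) mod n = (1 + 2 * Suc i) mod n \<or> (x + 2) mod n = (2 + 2 * Suc i) mod n"
    if "(a+b) mod n = (1+2*i) mod n \<or> (a+b) mod n = (2+2*i) mod n" "x mod n = (a + b) mod n" for x
  proof -
    have h: "(x + 2) mod n = (s + 2) mod n" if "x mod n = s mod n" for s
      using that by (metis mod_add_left_eq)
    from that have "x mod n = (1+2*i) mod n \<or> x mod n = (2+2*i) mod n" by simp
    then show ?thesis
    proof
      assume "x mod n = (1+2*i) mod n"
      then have "(x+2) mod n = (1+2*i+2) mod n" by (rule h)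
      moreover have "1+2*i+2 = 1 + 2 * Suc i" by simp
      ultimately show ?thesis by simp
    next
      assume "x mod n = (2+2*i) mod n"
      then have "(x+2) mod n = (2+2*i+2) mod n" by (rule h)
      moreover have "2+2*i+2 = 2 + 2 * Suc i" by simp
      ultimately show ?thesis by simp
    qed
  qed
  show ?case
  proof (cases "b = n")
    case True
    then have dd: "d = {1, a+1}" using d0 ab unfolding rot_def by auto
    have am: "a mod n = (a + b) mod n" using True by simp
    have k: "(a + 2) mod n = (1 + 2 * Suc i) mod n \<or> (a + 2) mod n = (2 + 2 * Suc i) mod n"
      by (rule key[OF ab(5) am])
    have s: "1 + (a + 1) = a + 2" by simp
    have "d = {1, a+1} \<and> 1 < a+1 \<and> 1 \<le> (1::nat) \<and> a + 1 \<le> n \<and>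
      ((1 + (a+1)) mod n = (1 + 2 * Suc i) mod n \<or> (1 + (a+1)) mod n = (2 + 2 * Suc i) mod n)"
      using dd ab(2,3,4) k True unfolding s by linarith
    note fin = this
    show ?thesis by (rule exI[where x=1], rule exI[where x="a+1"], rule fin)
  next
    case False
    then have dd: "d = {a+1, b+1}" using d0 ab unfolding rot_def by auto
    have k: "(a + b + 2) mod n = (1 + 2 * Suc i) mod n \<or> (a + b + 2) mod n = (2 + 2 * Suc i) mod n"
      by (rule key[OF ab(5) refl])
    have s: "(a + 1) + (b + 1) = a + b + 2" by simp
    have "d = {a+1, b+1} \<and> a+1 < b+1 \<and> 1 \<le> a+1 \<and> b + 1 \<le> n \<and>
      (((a+1) + (b+1)) mod n = (1 + 2 * Suc i) mod n \<or> ((a+1) + (b+1)) mod n = (2 + 2 * Suc i) mod n)"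
      using dd ab(2,3,4) k False unfolding s by linarith
    note fin = this
    show ?thesis by (rule exI[where x="a+1"], rule exI[where x="b+1"], rule fin)
  qed
qed

lemma mod_distinct: "1 \<le> p \<Longrightarrow> p < q \<Longrightarrow> q \<le> (n::nat) \<Longrightarrow> p mod n \<noteq> q mod n"
proof (cases "q = n")
  case True
  assume "1 \<le> p" "p < q" "q \<le> n"
  then show ?thesis using True by simp
next
  case False
  assume "1 \<le> p" "p < q" "q \<le> n"
  then show ?thesis using False by simp
qed

lemma Zi_disj:
  assumes n: "n \<ge> 4" and ij: "i < j" and jn: "2 * j + 2 \<le> n"
  shows "Zi n i \<inter> Zi n j = {}"
proof (rule ccontr)
  assume "Zi n i \<inter> Zi n j \<noteq> {}"
  then obtain d where d: "d \<in> Zi n i" "d \<in> Zi n j" by blast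
  obtain a b where ab: "d = {a,b}" "a < b"
     "(a+b) mod n = (1+2*i) mod n \<or> (a+b) mod n = (2+2*i) mod n" using Zi_sum[OF n d(1)] by blast
  obtain a' b' where ab': "d = {a',b'}" "a' < b'"
     "(a'+b') mod n = (1+2*j) mod n \<or> (a'+b') mod n = (2+2*j) mod n" using Zi_sum[OF n d(2)] by blast
  have "a = a' \<and> b = b'" using pair_sorted_eq[of a b a' b'] ab ab' by simp
  then have "(a+b) mod n = (1+2*j) mod n \<or> (a+b) mod n = (2+2*j) mod n" using ab' by simp
  moreover have "(1+2*i) mod n \<noteq> (1+2*j) mod n" by (rule mod_distinct) (use ij jn in auto)
  moreover have "(1+2*i) mod n \<noteq> (2+2*j) mod n" by (rule mod_distinct) (use ij jn in auto)
  moreover have "(2+2*i) mod n \<noteq> (1+2*j) mod n" by (rule mod_distinct) (use ij jn in auto)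
  moreover have "(2+2*i) mod n \<noteq> (2+2*j) mod n" by (rule mod_distinct) (use ij jn in auto)
  ultimately show False using ab(3) by argo
qed

lemma tri_nonempty: "is_triangulation n T \<Longrightarrow> n \<ge> 4 \<Longrightarrow> T \<noteq> {}"
proof -
  assume a: "is_triangulation n T" "n \<ge> 4"
  obtain v where "v \<in> ears n T" using two_ears[OF a] by blast
  then have "ear_diag n v \<in> T" unfolding ears_def by simp
  then show "T \<noteq> {}" by blast
qed

lemma Zi_ne:
  assumes n: "n \<ge> 4" and i: "i < n div 2" and j: "j < n div 2" and ij: "i \<noteq> j"
  shows "Zi n i \<inter> Zi n j = {}"
proof (cases "i < j")
  case True
  moreover have "2 * j + 2 \<le> n" using j by presburger
  ultimately show ?thesis using Zi_disj[OF n] by blast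
next
  case False
  then have "j < i" using ij by auto
  moreover have "2 * i + 2 \<le> n" using i by presburger
  ultimately show ?thesis using Zi_disj[OF n, of j i] by (simp add: Int_commute)
qed

lemma clique_exists:
  assumes n: "n \<ge> 4"
  shows "is_KG_clique n (Zi n ` {..<n div 2}) \<and> card (Zi n ` {..<n div 2}) = n div 2"
proof
  show "is_KG_clique n (Zi n ` {..<n div 2})"
    unfolding is_KG_clique_def KG_adj_def
  proof (intro conjI ballI impI)
    show "Zi n ` {..<n div 2} \<subseteq> Triangs n" using Zi_tri[OF n] unfolding Triangs_def by auto
  next
    fix T T' assume T: "T \<in> Zi n ` {..<n div 2}" and T': "T' \<in> Zi n ` {..<n div 2}" and ne: "T \<noteq> T'"
    then obtain i j where "i < n div 2" "j < n div 2" "T = Zi n i" "T' = Zi n j" by auto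
    then show "T \<inter> T' = {}" using Zi_ne[OF n] ne by blast
  qed
  have "inj_on (Zi n) {..<n div 2}"
  proof (rule inj_onI)
    fix i j assume i: "i \<in> {..<n div 2}" and j: "j \<in> {..<n div 2}" and e: "Zi n i = Zi n j"
    show "i = j"
    proof (rule ccontr)
      assume "i \<noteq> j"
      then have "Zi n i \<inter> Zi n j = {}" using Zi_ne[OF n] i j by auto
      then show False using e tri_nonempty[OF Zi_tri[OF n] n] by auto
    qed
  qed
  then show "card (Zi n ` {..<n div 2}) = n div 2" by (simp add: card_image)
qed

lemma chrom_lower:
  assumes n: "n \<ge> 4"
  shows "KG_chromatic_number n \<ge> n div 2"
proof -
  define P where "P = (\<lambda>k. \<exists>f :: nat set set \<Rightarrow> nat.
      (\<forall>T\<in>Triangs n. f T < k) \<and>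
      (\<forall>T\<in>Triangs n. \<forall>T'\<in>Triangs n. T \<noteq> T' \<and> KG_adj T T' \<longrightarrow> f T \<noteq> f T'))"
  have ex: "\<exists>k. P k"
  proof -
    obtain f :: "nat set set \<Rightarrow> nat" and m where fm: "f ` Triangs n = {i. i < m}" "inj_on f (Triangs n)"
      using finite_imp_inj_to_nat_seg[OF finite_Triangs] by blast
    have "P m" unfolding P_def
      by (rule exI[of _ f]) (use fm in \<open>auto simp: inj_on_def\<close>)
    then show ?thesis by blast
  qed
  have low: "n div 2 \<le> k" if "P k" for k
  proof -
    obtain f :: "nat set set \<Rightarrow> nat" where f: "\<forall>T\<in>Triangs n. f T < k"
      "\<forall>T\<in>Triangs n. \<forall>T'\<in>Triangs n. T \<noteq> T' \<and> KG_adj T T' \<longrightarrow> f T \<noteq> f T'"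
      using \<open>P k\<close> unfolding P_def by blast
    define C where "C = Zi n ` {..<n div 2}"
    have C: "is_KG_clique n C" "card C = n div 2" using clique_exists[OF n] C_def by auto
    have CT: "C \<subseteq> Triangs n" using C(1) unfolding is_KG_clique_def by blast
    have "inj_on f C"
    proof (rule inj_onI)
      fix T T' assume "T \<in> C" "T' \<in> C" "f T = f T'"
      then show "T = T'" using f(2) CT C(1) unfolding is_KG_clique_def by blast
    qed
    moreover have "f ` C \<subseteq> {..<k}" using f(1) CT by auto
    ultimately have "card C \<le> card {..<k}" by (intro card_inj_on_le) auto
    then show ?thesis using C(2) by simp
  qed
  have "KG_chromatic_number n = (LEAST k. P k)" unfolding KG_chromatic_number_def P_def by simp
  moreover have "P (LEAST k. P k)" by (rule LeastI_ex[OF ex])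
  ultimately show ?thesis using low by simp
qed

theorem mainTheorem15:
  fixes n :: nat
  assumes "n \<ge> 4"
  shows "KG_clique_number n = n div 2 \<and> KG_chromatic_number n \<ge> n div 2"
proof
  define S where "S = {card C | C. is_KG_clique n C}"
  have sub: "S \<subseteq> {..n div 2}" using clique_upper[OF _ assms] unfolding S_def by auto
  have "finite S" by (rule finite_subset[OF sub]) simp
  moreover have "\<And>y. y \<in> S \<Longrightarrow> y \<le> n div 2" using sub by auto
  moreover have "n div 2 \<in> S"
  proof -
    obtain C where C: "is_KG_clique n C" "card C = n div 2" using clique_exists[OF assms] by blast
    have "\<exists>C'. n div 2 = card C' \<and> is_KG_clique n C'"
      apply (rule exI[of _ C]) using C apply simp done
    then show ?thesis unfolding S_def by simp
  qed
  ultimately have "Max S = n div 2" by (rule Max_eqI)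
  then show "KG_clique_number n = n div 2" unfolding KG_clique_number_def S_def by simp
  show "KG_chromatic_number n \<ge> n div 2" by (rule chrom_lower[OF assms])
qed

end
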